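(* Let $\kappa<\Gamma$ be infinite cardinals. Then the Banach space $X^{\kappa,\Gamma}$ fails the ball fixed point property.
   Context: Cardinals are identified with initial ordinals, and an ordinal is the set of smaller ordinals. $\ell_\infty(\Gamma)$ is the Banach space of bounded functions $f\colon\Gamma\to\mathbb{R}$ with $\|f\|_\infty=\sup_{\gamma\in\Gamma}|f(\gamma)|$. $[\Gamma]^\kappa$ is the family of subsets of $\Gamma$ of cardinality $\kappa$. Define $X^{\kappa,\Gamma}=\{f\in\ell_\infty(\Gamma):\exists A\in[\Gamma]^\kappa \text{ such that } f|_{\Gamma\setminus A}\text{ is constant}\}$, a closed linear subspace of $\ell_\infty(\Gamma)$ with the sup norm. A real Banach space $X$ has the ball fixed point property (BFPP) if every nonexpansive map $T\colon B_X\to B_X$ (i.e. $\|Tx-Ty\|\le\|x-y\|$) has a fixed point, where $B_X$ is the closed unit ball. *)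

theory Defs
  imports "HOL-Analysis.Analysis" "HOL-Library.Equipollence"
begin

text \<open>Gamma is modelled as the universe of a type 'a; elements of l_infty(Gamma)
  are bounded functions 'a => real with the sup norm.\<close>

definition linfty :: "('a \<Rightarrow> real) set" where
  "linfty = {f. bounded (range f)}"

definition supnorm :: "('a \<Rightarrow> real) \<Rightarrow> real" where
  "supnorm f = (SUP x. \<bar>f x\<bar>)"

text \<open>X^{kappa,Gamma}: the cardinal kappa is represented by a set K; A ranges over
  subsets of Gamma equipollent to K (i.e. of cardinality kappa).\<close>
definition Xspace :: "'b set \<Rightarrow> ('a \<Rightarrow> real) set" where
  "Xspace K = {f \<in> linfty. \<exists>A :: 'a set. A \<approx> K \<and> (\<exists>c. \<forall>x \<in> - A. f x = c)}"

definition unit_ball :: "('a \<Rightarrow> real) set \<Rightarrow> ('a \<Rightarrow> real) set" where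
  "unit_ball V = {f \<in> V. supnorm f \<le> 1}"

definition nonexpansive_on :: "('a \<Rightarrow> real) set \<Rightarrow> (('a \<Rightarrow> real) \<Rightarrow> ('a \<Rightarrow> real)) \<Rightarrow> bool" where
  "nonexpansive_on S T \<longleftrightarrow> (\<forall>f\<in>S. \<forall>g\<in>S. supnorm (T f - T g) \<le> supnorm (f - g))"

definition ball_fpp :: "('a \<Rightarrow> real) set \<Rightarrow> bool" where
  "ball_fpp V \<longleftrightarrow> (\<forall>T. T ` unit_ball V \<subseteq> unit_ball V \<and> nonexpansive_on (unit_ball V) T
      \<longrightarrow> (\<exists>f \<in> unit_ball V. T f = f))"

end

theory Submission
  imports Defs
begin

lemma lepoll_card: "(A \<lesssim> B) = ( (card_of A, card_of B) \<in> ordLeq )"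
  unfolding lepoll_def using card_of_ordLeq[of A B] by auto

lemma small_UN: assumes "infinite K" "I \<lesssim> K" "\<forall>i\<in>I. A i \<lesssim> K" shows "(\<Union>i\<in>I. A i) \<lesssim> K"
  using card_of_UNION_ordLeq_infinite[of K I A] assms by (simp add: lepoll_card)

lemma small_Un: assumes "infinite K" "A \<lesssim> K" "B \<lesssim> K" shows "A \<union> B \<lesssim> K"
proof -
  have "(\<Union>i\<in>{True,False}. (if i then A else B)) \<lesssim> K"
    apply (rule small_UN[OF assms(1)])
    using assms by (auto intro: finite_lepoll_infinite)
  moreover have "(\<Union>i\<in>{True,False}. (if i then A else B)) = A \<union> B" by auto
  ultimately show ?thesis by simp
qed

lemma small_insert: assumes "infinite K" "A \<lesssim> K" shows "insert x A \<lesssim> K"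
proof -
  have "{x} \<lesssim> K" using assms by (auto intro: finite_lepoll_infinite)
  then show ?thesis using small_Un[OF assms(1) _ assms(2)] by (metis insert_is_Un)
qed

lemma X_intro:
  fixes f :: "'a \<Rightarrow> real" and K :: "'b set"
  assumes "infinite K" "K \<lesssim> (UNIV::'a set)" "f \<in> linfty" "B \<lesssim> K" "\<forall>x. x \<notin> B \<longrightarrow> f x = c"
  shows "f \<in> Xspace K"
proof -
  obtain g :: "'b \<Rightarrow> 'a" where g: "inj_on g K" using assms(2) unfolding lepoll_def by blast
  let ?A = "B \<union> g ` K"
  have e: "g ` K \<approx> K" using g by (simp add: inj_on_image_eqpoll_self)
  hence "?A \<lesssim> K" using small_Un assms eqpoll_imp_lepoll by blast
  moreover have "K \<lesssim> ?A"
    by (meson e eqpoll_sym lepoll_trans1 subset_imp_lepoll sup_ge2)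
  ultimately have "?A \<approx> K" by (simp add: lepoll_antisym)
  thus ?thesis using assms unfolding Xspace_def by blast
qed

lemma linfty_bound: "f \<in> linfty \<Longrightarrow> \<exists>M. \<forall>x. \<bar>f x\<bar> \<le> M"
  unfolding linfty_def bounded_iff by auto

lemma supnorm_ge: assumes "f \<in> linfty" shows "\<bar>f x\<bar> \<le> supnorm f"
proof -
  obtain M where "\<forall>x. \<bar>f x\<bar> \<le> M" using linfty_bound[OF assms] by blast
  then have bdd: "bdd_above (range (\<lambda>x. \<bar>f x\<bar>))" by (auto intro: bdd_aboveI2)
  show ?thesis unfolding supnorm_def using cSUP_upper[OF UNIV_I bdd] by simp
qed

lemma supnorm_le: "(\<And>x. \<bar>f x\<bar> \<le> d) \<Longrightarrow> supnorm f \<le> d"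
  unfolding supnorm_def by (rule cSUP_least) auto

lemma diff_linfty: assumes "f \<in> linfty" "g \<in> linfty" shows "f - g \<in> linfty"
proof -
  obtain M N where "\<forall>x. \<bar>f x\<bar> \<le> M" "\<forall>x. \<bar>g x\<bar> \<le> N" using linfty_bound assms by metis
  then have "\<forall>x. \<bar>(f - g) x\<bar> \<le> M + N"
    by (metis abs_triangle_ineq4 add_mono order_trans fun_diff_def)
  then show ?thesis unfolding linfty_def bounded_iff by auto
qed

lemma bound1_linfty: "(\<And>x. \<bar>f x\<bar> \<le> 1) \<Longrightarrow> f \<in> linfty"
  unfolding linfty_def bounded_iff by auto

lemma sup_pm1: assumes "S \<noteq> {}" "S \<subseteq> {-1,1::real}" shows "Sup S \<in> {-1,1}" "Inf S \<in> {-1,1}"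
proof -
  have "finite S" using assms(2) finite_subset by blast
  have "Max S \<in> {-1,1}" "Min S \<in> {-1,1}"
    using Max_in[OF \<open>finite S\<close> assms(1)] Min_in[OF \<open>finite S\<close> assms(1)] assms(2) by blast+
  then show "Sup S \<in> {-1,1}" "Inf S \<in> {-1,1}"
    using \<open>finite S\<close> assms(1) by (simp_all add: cSup_eq_Max cInf_eq_Min del: insert_iff)
qed

lemma sup_bounds: assumes "I \<noteq> {}" "\<forall>i\<in>I. \<bar>u i\<bar> \<le> (1::real)"
  shows "\<bar>SUP i\<in>I. u i\<bar> \<le> 1" "\<bar>INF i\<in>I. u i\<bar> \<le> 1"
proof -
  have ba: "bdd_above (u ` I)" "bdd_below (u ` I)" using assms(2)
    by (auto intro!: bdd_aboveI2[where M=1] bdd_belowI2[where m="-1"] simp: abs_le_iff)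
  obtain i where i: "i \<in> I" using assms(1) by blast
  have "(SUP i\<in>I. u i) \<le> 1" using assms by (intro cSUP_least) (auto simp: abs_le_iff)
  moreover have "u i \<le> (SUP i\<in>I. u i)" using i ba by (intro cSUP_upper)
  moreover have "(INF i\<in>I. u i) \<ge> -1" using assms by (intro cINF_greatest) (auto simp: abs_le_iff)
  moreover have "u i \<ge> (INF i\<in>I. u i)" using i ba by (intro cINF_lower)
  ultimately show "\<bar>SUP i\<in>I. u i\<bar> \<le> 1" "\<bar>INF i\<in>I. u i\<bar> \<le> 1" using assms(2) i
    by (auto simp: abs_le_iff)
qed

lemma sup_lip: assumes "I \<noteq> {}" "\<forall>i\<in>I. \<bar>u i\<bar> \<le> (1::real)" "\<forall>i\<in>I. \<bar>v i\<bar> \<le> (1::real)"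
   "\<forall>i\<in>I. \<bar>u i - v i\<bar> \<le> d"
  shows "\<bar>(SUP i\<in>I. u i) - (SUP i\<in>I. v i)\<bar> \<le> d" "\<bar>(INF i\<in>I. u i) - (INF i\<in>I. v i)\<bar> \<le> d"
proof -
  have ba: "bdd_above (u ` I)" "bdd_below (u ` I)" "bdd_above (v ` I)" "bdd_below (v ` I)" 
    using assms(2,3)
    by (auto intro!: bdd_aboveI2[where M=1] bdd_belowI2[where m="-1"] simp: abs_le_iff)
  have "(SUP i\<in>I. u i) \<le> (SUP i\<in>I. v i) + d"
  proof (rule cSUP_least[OF assms(1)])
    fix i assume "i \<in> I"
    then have "u i \<le> v i + d" "v i \<le> (SUP i\<in>I. v i)" using assms(4) ba by (auto simp: abs_le_iff intro: cSUP_upper)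
    then show "u i \<le> (SUP i\<in>I. v i) + d" by linarith
  qed
  moreover have "(SUP i\<in>I. v i) \<le> (SUP i\<in>I. u i) + d"
  proof (rule cSUP_least[OF assms(1)])
    fix i assume "i \<in> I"
    then have "v i \<le> u i + d" "u i \<le> (SUP i\<in>I. u i)" using assms(4) ba by (auto simp: abs_le_iff intro: cSUP_upper)
    then show "v i \<le> (SUP i\<in>I. u i) + d" by linarith
  qed
  ultimately show "\<bar>(SUP i\<in>I. u i) - (SUP i\<in>I. v i)\<bar> \<le> d" by (auto simp: abs_le_iff)
  have "(INF i\<in>I. u i) - d \<le> (INF i\<in>I. v i)"
  proof (rule cINF_greatest[OF assms(1)])
    fix i assume "i \<in> I"
    then have "u i \<le> v i + d" "(INF i\<in>I. u i) \<le> u i" using assms(4) ba by (auto simp: abs_le_iff intro: cINF_lower)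
    then show "(INF i\<in>I. u i) - d \<le> v i" by linarith
  qed
  moreover have "(INF i\<in>I. v i) - d \<le> (INF i\<in>I. u i)"
  proof (rule cINF_greatest[OF assms(1)])
    fix i assume "i \<in> I"
    then have "v i \<le> u i + d" "(INF i\<in>I. v i) \<le> v i" using assms(4) ba by (auto simp: abs_le_iff intro: cINF_lower)
    then show "(INF i\<in>I. v i) - d \<le> u i" by linarith
  qed
  ultimately show "\<bar>(INF i\<in>I. u i) - (INF i\<in>I. v i)\<bar> \<le> d" by (auto simp: abs_le_iff)
qed


lemma main_constr:
  fixes lt :: "'a \<Rightarrow> 'a \<Rightarrow> bool" and K :: "'b set"
  assumes trans: "\<And>x y z. lt x y \<Longrightarrow> lt y z \<Longrightarrow> lt x z"
    and irr: "\<And>x. \<not> lt x x"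
    and tot: "\<And>x y. x \<noteq> y \<Longrightarrow> lt x y \<or> lt y x"
    and wfr: "wf {(x,y). lt x y}"
    and infK: "infinite K" and KU: "K \<lesssim> (UNIV::'a set)" and nUK: "\<not> (UNIV::'a set) \<lesssim> K"
  shows "\<not> ball_fpp (Xspace K :: ('a \<Rightarrow> real) set)"
proof -
  define U where "U x = {y. lt y x}" for x
  define W where "W = {x. U x \<lesssim> K}"
  have Umono: "U y \<subseteq> U x" if "lt y x" for x y using trans that unfolding U_def by blast
  have Wdown: "y \<in> W" if "x \<in> W" "lt y x" for x y
    using that lepoll_trans[OF subset_imp_lepoll[OF Umono[of y x]]] unfolding W_def by blast
  have Wbig: "\<not> W \<lesssim> K"
  proof (cases "W = UNIV")
    case True thus ?thesis using nUK by simp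
  next
    case False
    then obtain z where "z \<in> - W" by auto
    obtain w where w: "w \<in> - W" "\<And>y. (y, w) \<in> {(x,y). lt x y} \<Longrightarrow> y \<notin> - W"
      using wfE_min[OF wfr \<open>z \<in> - W\<close>] by blast
    have "W = U w"
    proof
      show "W \<subseteq> U w"
      proof
        fix x assume x: "x \<in> W"
        have "x \<noteq> w" using x w(1) by auto
        moreover have "\<not> lt w x"
        proof
          assume "lt w x"
          then have "U w \<lesssim> K" using x lepoll_trans[OF subset_imp_lepoll[OF Umono[of w x]]] unfolding W_def by blast
          then show False using w(1) unfolding W_def by auto
        qed
        ultimately show "x \<in> U w" using tot unfolding U_def by blast
      qed
      show "U w \<subseteq> W" using w(2) unfolding U_def by auto
    qed
    then show ?thesis using w(1) unfolding W_def by auto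
  qed
  have Wnomax: "\<exists>w\<in>W. lt x w" if "x \<in> W" for x
  proof (rule ccontr)
    assume nx: "\<not> (\<exists>w\<in>W. lt x w)"
    have "W \<subseteq> insert x (U x)"
    proof
      fix y assume y: "y \<in> W"
      show "y \<in> insert x (U x)"
      proof (cases "y = x")
        case False
        then have "lt x y \<or> lt y x" using tot by metis
        then show ?thesis using nx y unfolding U_def by auto
      qed simp
    qed
    moreover have "insert x (U x) \<lesssim> K" using that small_insert[OF infK] unfolding W_def by auto
    ultimately have "W \<lesssim> K" by (rule lepoll_trans[OF subset_imp_lepoll])
    then show False using Wbig by blast
  qed
  have Wbound: "\<exists>x\<in>W. \<forall>b\<in>B. lt b x" if "B \<subseteq> W" "B \<lesssim> K" for B
  proof (rule ccontr)
    assume nb: "\<not> (\<exists>x\<in>W. \<forall>b\<in>B. lt b x)"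
    have sub: "W \<subseteq> B \<union> (\<Union>b\<in>B. U b)"
    proof
      fix y assume y: "y \<in> W"
      then obtain b where b: "b \<in> B" "\<not> lt b y" using nb by blast
      show "y \<in> B \<union> (\<Union>b\<in>B. U b)"
      proof (cases "y = b")
        case False
        then have "lt y b" using tot b(2) by metis
        then show ?thesis using b(1) unfolding U_def by auto
      qed (use b in simp)
    qed
    have "(\<Union>b\<in>B. U b) \<lesssim> K" using that by (intro small_UN[OF infK]) (auto simp: W_def)
    then have "B \<union> (\<Union>b\<in>B. U b) \<lesssim> K" using small_Un[OF infK that(2)] by blast
    then have "W \<lesssim> K" by (rule lepoll_trans[OF subset_imp_lepoll[OF sub]])
    then show False using Wbig by blast
  qed
  have "W \<noteq> {}" using Wbig by auto
  then obtain z0 where "z0 \<in> W" by blast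
  obtain w0 where w0': "w0 \<in> W" "\<And>y. (y, w0) \<in> {(x,y). lt x y} \<Longrightarrow> y \<notin> W"
    using wfE_min[OF wfr \<open>z0 \<in> W\<close>] by blast
  have w0: "lt w0 y" if "y \<noteq> w0" for y
    using tot[OF that] w0' Wdown by blast
  define seg where "seg b y = {d. (d = b \<or> lt b d) \<and> lt d y}" for b y
  define LS where "LS f y = (INF b\<in>U y. SUP d\<in>seg b y. (f::'a\<Rightarrow>real) d)" for f y
  define T where "T f y = (if y \<in> W then (if y = w0 then 1 else - LS f y) else - f y)" for f y
  have Une: "U y \<noteq> {}" if "y \<noteq> w0" for y using w0[OF that] unfolding U_def by auto
  have segne: "seg b y \<noteq> {}" if "b \<in> U y" for b y using that unfolding seg_def U_def by auto
  have LSb: "\<bar>LS f y\<bar> \<le> 1" if "\<forall>x. \<bar>f x\<bar> \<le> 1" "y \<noteq> w0" for f y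
    unfolding LS_def
  proof (rule sup_bounds(2)[OF Une[OF that(2)]])
    show "\<forall>b\<in>U y. \<bar>SUP d\<in>seg b y. f d\<bar> \<le> 1" using sup_bounds(1)[OF segne] that(1) by blast
  qed
  have LSlip: "\<bar>LS f y - LS g y\<bar> \<le> d" if "\<forall>x. \<bar>f x\<bar> \<le> 1" "\<forall>x. \<bar>g x\<bar> \<le> 1"
    "\<forall>x. \<bar>f x - g x\<bar> \<le> d" "y \<noteq> w0" for f g y d
    unfolding LS_def
  proof (rule sup_lip(2)[OF Une[OF that(4)]])
    show "\<forall>b\<in>U y. \<bar>SUP d\<in>seg b y. f d\<bar> \<le> 1" using sup_bounds(1)[OF segne] that(1) by blast
    show "\<forall>b\<in>U y. \<bar>SUP d\<in>seg b y. g d\<bar> \<le> 1" using sup_bounds(1)[OF segne] that(2) by blast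
    show "\<forall>b\<in>U y. \<bar>(SUP d\<in>seg b y. f d) - (SUP d\<in>seg b y. g d)\<bar> \<le> d"
      using sup_lip(1)[OF segne] that(1-3) by blast
  qed
  have Tb: "\<bar>T f y\<bar> \<le> 1" if "\<forall>x. \<bar>f x\<bar> \<le> 1" for f y
    unfolding T_def using that LSb by auto
  have Tlip: "\<bar>T f y - T g y\<bar> \<le> d" if "\<forall>x. \<bar>f x\<bar> \<le> 1" "\<forall>x. \<bar>g x\<bar> \<le> 1"
    "\<forall>x. \<bar>f x - g x\<bar> \<le> d" for f g y d
  proof -
    have "d \<ge> 0" using that(3) by (meson abs_ge_zero order_trans)
    show ?thesis
    proof (cases "y \<in> W")
      case True
      then show ?thesis
      proof (cases "y = w0")
        case False
        then have "\<bar>LS f y - LS g y\<bar> \<le> d" using LSlip[OF that] by blast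
        then show ?thesis using True False unfolding T_def by (simp add: abs_minus_commute)
      qed (simp add: T_def \<open>d \<ge> 0\<close>)
    next
      case False
      then show ?thesis using that(3) unfolding T_def by (simp add: abs_minus_commute)
    qed
  qed
  have LSc: "LS f y = c" if fc: "\<forall>z. z \<notin> A \<longrightarrow> f z = c" and x: "x \<in> W" "\<forall>a\<in>A\<inter>W. lt a x"
    and xy: "lt x y" and yW: "y \<in> W" and fb: "\<forall>x. \<bar>f x\<bar> \<le> 1" for f c A x y
  proof -
    have tail: "f d = c" if "d = x \<or> lt x d" "lt d y" for d
    proof -
      have "d \<in> W" using Wdown[OF yW that(2)] .
      moreover have "\<not> lt d x" using that(1) irr[of x] trans[of x d x] by blast
      ultimately have "d \<notin> A" using x(2) by blast
      then show ?thesis using fc by blast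
    qed
    have bdd: "bdd_above (f ` S)" for S using fb by (auto intro!: bdd_aboveI2[where M=1] simp: abs_le_iff)
    have "(SUP d\<in>seg x y. f d) = c"
    proof -
      have "f ` seg x y = {c}" using tail segne[of x y] xy unfolding seg_def U_def by auto
      then show ?thesis by simp
    qed
    moreover have "(SUP d\<in>seg b y. f d) \<ge> c" if "b \<in> U y" for b
    proof -
      define d where "d = (if lt b x then x else b)"
      have "d \<in> seg b y" using that xy unfolding d_def seg_def U_def by auto
      moreover have "f d = c"
      proof (cases "lt b x")
        case True then show ?thesis using tail xy unfolding d_def by auto
      next
        case False
        then have "b = x \<or> lt x b" using tot[of b x] by blast
        then show ?thesis using tail[of b] that False unfolding d_def U_def by auto
      qed
      ultimately show ?thesis using cSUP_upper[OF _ bdd] by metis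
    qed
    ultimately show ?thesis unfolding LS_def
      by (intro cInf_eq_minimum) (use xy U_def in auto)
  qed
  let ?B = "unit_ball (Xspace K) :: ('a \<Rightarrow> real) set"
  have memB: "f \<in> linfty \<and> (\<forall>x. \<bar>f x\<bar> \<le> 1) \<and> (\<exists>A c. A \<approx> K \<and> (\<forall>x. x \<notin> A \<longrightarrow> f x = c))"
    if "f \<in> ?B" for f
  proof -
    have fX: "f \<in> Xspace K" and sn: "supnorm f \<le> 1" using that unfolding unit_ball_def by auto
    then have lin: "f \<in> linfty" and ex: "\<exists>A. A \<approx> K \<and> (\<exists>c. \<forall>x\<in>-A. f x = c)"
      unfolding Xspace_def by auto
    have "\<forall>x. \<bar>f x\<bar> \<le> 1" using supnorm_ge[OF lin] sn by (meson order_trans)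
    moreover from ex obtain A c where "A \<approx> K" "\<forall>x\<in>-A. f x = c" by blast
    ultimately show ?thesis using lin by blast
  qed
  have bound_of: "\<exists>x\<in>W. \<forall>a\<in>A\<inter>W. lt a x" if "A \<approx> K" for A :: "'a set"
    using lepoll_trans[OF subset_imp_lepoll[of "A \<inter> W" A] eqpoll_imp_lepoll[OF that]] by (intro Wbound) auto
  have notw0: "y \<noteq> w0" if "lt x y" for x y
    using that w0[of x] irr[of w0] irr[of x] trans[of w0 x w0] by metis
  have Tmaps: "T f \<in> ?B" if f: "f \<in> ?B" for f
  proof -
    obtain A c where Ac: "A \<approx> K" "\<forall>x. x \<notin> A \<longrightarrow> f x = c" and fb: "\<forall>x. \<bar>f x\<bar> \<le> 1"
      using memB[OF f] by blast
    obtain x where x: "x \<in> W" "\<forall>a\<in>A\<inter>W. lt a x" using bound_of[OF Ac(1)] by blast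
    let ?C = "A \<union> insert x (U x)"
    have "U x \<lesssim> K" using x(1) unfolding W_def by blast
    then have Csmall: "?C \<lesssim> K" using small_Un[OF infK eqpoll_imp_lepoll[OF Ac(1)] small_insert[OF infK]] by blast
    have "T f z = - c" if "z \<notin> ?C" for z
    proof (cases "z \<in> W")
      case True
      have "lt x z" using that tot[of x z] unfolding U_def by auto
      then show ?thesis using LSc[OF Ac(2) x \<open>lt x z\<close> True fb] notw0 True unfolding T_def by auto
    next
      case False then show ?thesis using that Ac(2) unfolding T_def by auto
    qed
    moreover have "T f \<in> linfty" using Tb fb by (intro bound1_linfty) auto
    ultimately have "T f \<in> Xspace K" using X_intro[OF infK KU _ Csmall] by blast
    moreover have "supnorm (T f) \<le> 1" using Tb fb by (intro supnorm_le) auto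
    ultimately show ?thesis unfolding unit_ball_def by auto
  qed
  have Tne: "nonexpansive_on ?B T"
    unfolding nonexpansive_on_def
  proof (intro ballI)
    fix f g assume f: "f \<in> ?B" and g: "g \<in> ?B"
    have fg: "f - g \<in> linfty" using memB f g diff_linfty by blast
    have "\<forall>x. \<bar>f x - g x\<bar> \<le> supnorm (f - g)" using supnorm_ge[OF fg] by simp
    then show "supnorm (T f - T g) \<le> supnorm (f - g)"
      using memB[OF f] memB[OF g] Tlip by (intro supnorm_le) simp
  qed
  have nofix: "T f \<noteq> f" if f: "f \<in> ?B" for f
  proof
    assume fx: "T f = f"
    obtain A c where Ac: "A \<approx> K" "\<forall>x. x \<notin> A \<longrightarrow> f x = c" and fb: "\<forall>x. \<bar>f x\<bar> \<le> 1"
      using memB[OF f] by blast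
    have all1: "w \<in> W \<longrightarrow> \<bar>f w\<bar> = 1" for w
    proof (induction w rule: wf_induct_rule[OF wfr])
      case (1 w)
      show ?case
      proof
        assume wW: "w \<in> W"
        show "\<bar>f w\<bar> = 1"
        proof (cases "w = w0")
          case True
          then have "T f w = 1" using wW by (simp add: T_def)
          then show ?thesis using fx by simp
        next
          case False
          have IH: "f d \<in> {-1,1}" if "lt d w" for d
          proof -
            have "\<bar>f d\<bar> = 1" using 1 that Wdown[OF wW that] by blast
            then show ?thesis by (cases "f d \<ge> 0") auto
          qed
          have "(SUP d\<in>seg b w. f d) \<in> {-1,1}" if "b \<in> U w" for b
            using segne[OF that] IH unfolding seg_def by (intro sup_pm1) auto
          then have "LS f w \<in> {-1,1}" unfolding LS_def using Une[OF False]
            by (intro sup_pm1) auto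
          moreover have "f w = - LS f w"
          proof -
            have "T f w = - LS f w" using wW False by (simp add: T_def)
            then show ?thesis using fx by simp
          qed
          ultimately show ?thesis by auto
        qed
      qed
    qed
    obtain x where x: "x \<in> W" "\<forall>a\<in>A\<inter>W. lt a x" using bound_of[OF Ac(1)] by blast
    obtain w where w: "w \<in> W" "lt x w" using Wnomax[OF x(1)] by blast
    have "w \<notin> A" using x(2) w irr[of w] trans[of w x w] by blast
    then have "f w = c" using Ac(2) by blast
    moreover have "f w = - c"
    proof -
      have "T f w = - c" using LSc[OF Ac(2) x w(2) w(1) fb] notw0[OF w(2)] w(1) by (simp add: T_def)
      then show ?thesis using fx by simp
    qed
    ultimately have "f w = 0" by simp
    then show False using all1[of w] w(1) by simp
  qed
  show ?thesis unfolding ball_fpp_def using Tmaps Tne nofix by blast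
qed


theorem mainTheorem6:
  fixes K :: "'b set"
  assumes "infinite K"
    and "infinite (UNIV :: 'a set)"
    and "K \<prec> (UNIV :: 'a set)"
  shows "\<not> ball_fpp (Xspace K :: ('a \<Rightarrow> real) set)"
proof -
  obtain r :: "'a rel" where r: "well_order_on UNIV r" using well_order_on by blast
  have lin: "linear_order_on UNIV r" and wfr: "wf (r - Id)" using r unfolding well_order_on_def by auto
  have tr: "trans r" and an: "antisym r" and to: "total_on UNIV r"
    using lin unfolding linear_order_on_def partial_order_on_def preorder_on_def by auto
  define lt where "lt x y \<longleftrightarrow> (x, y) \<in> r \<and> x \<noteq> y" for x y
  have e: "{(x,y). lt x y} = r - Id" unfolding lt_def by auto
  have KU: "K \<lesssim> (UNIV::'a set)" using assms(3) by (simp add: lesspoll_def)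
  have nUK: "\<not> (UNIV::'a set) \<lesssim> K"
    using assms(3) lepoll_antisym unfolding lesspoll_def by blast
  show ?thesis
  proof (rule main_constr[of lt])
    show "lt x z" if "lt x y" "lt y z" for x y z
    proof -
      have "(x, z) \<in> r" using that tr unfolding lt_def trans_def by blast
      moreover have "x \<noteq> z"
      proof
        assume "x = z"
        then have "(x, y) \<in> r" "(y, x) \<in> r" using that unfolding lt_def by auto
        then have "x = y" using an unfolding antisym_def by blast
        then show False using that unfolding lt_def by auto
      qed
      ultimately show ?thesis unfolding lt_def by blast
    qed
    show "\<not> lt x x" for x unfolding lt_def by simp
    show "lt x y \<or> lt y x" if "x \<noteq> y" for x y
      using to that unfolding total_on_def lt_def by auto
    show "wf {(x,y). lt x y}" using wfr e by simp
  qed (use assms(1) KU nUK in auto)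
qed

end
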